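(* Let $F(x)$ be a quantifier-free formula such that $x\in\mathrm{RV}(F(x))$, and let $\mathbf c$ be a nonempty finite set of object constants containing every object constant occurring in $F(x)$. Then the formula $F(x)\rightarrow\mathit{in}_{\mathbf c}(x)$ is derivable from $\mathit{SPP}_{\mathbf c}$ in $\mathbf{INT}^=$.
   Context: Formulas are first-order formulas with object constants, predicate constants and equality, but no function constants of arity $>0$; primitive connectives $\bot,\land,\lor,\rightarrow$. Restricted variables: for quantifier-free $G$, $\mathrm{RV}(G)$ is: $\emptyset$ if $G$ is an equality between two variables; the set of variables of $G$ if $G$ is any other atomic formula; $\mathrm{RV}(\bot)=\emptyset$; $\mathrm{RV}(G\land H)=\mathrm{RV}(G)\cup\mathrm{RV}(H)$; $\mathrm{RV}(G\lor H)=\mathrm{RV}(G)\cap\mathrm{RV}(H)$; $\mathrm{RV}(G\rightarrow H)=\emptyset$. For a finite set $\mathbf c$ of object constants, $\mathit{in}_{\mathbf c}(x_1,\dots,x_m)$ is $\bigwedge_{1\le j\le m}\bigvee_{c\in\mathbf c}x_j=c$, and $\mathit{SPP}_{\mathbf c}$ is the conjunction of the sentences $\forall\mathbf x(p_i(\mathbf x)\rightarrow\mathit{in}_{\mathbf c}(\mathbf x))$ over all predicate constants $p_i$ occurring in $F(x)$ ($\mathbf x$ distinct variables of the arity of $p_i$). $\mathbf{INT}^=$ is intuitionistic predicate logic with equality. *)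

theory Defs
  imports Main
begin

text \<open>Variables are de Bruijn indices (loose indices are the free variables);
  object constants are named by natural numbers.
  A predicate constant is identified by its name together with its arity
  (the length of its argument list).\<close>

datatype tm = Var nat | Const nat

datatype fm =
    FBot
  | Pred nat "tm list"
  | Eq tm tm
  | And fm fm
  | Or fm fm
  | Imp fm fm
  | All fm
  | Ex fm

fun lift_tm :: "tm \<Rightarrow> nat \<Rightarrow> tm" where
  "lift_tm (Var i) k = (if i < k then Var i else Var (Suc i))"
| "lift_tm (Const c) k = Const c"

fun subst_tm :: "tm \<Rightarrow> tm \<Rightarrow> nat \<Rightarrow> tm" where
  "subst_tm (Var i) s k = (if k < i then Var (i - 1) else if i = k then s else Var i)"
| "subst_tm (Const c) s k = Const c"

primrec subst :: "fm \<Rightarrow> tm \<Rightarrow> nat \<Rightarrow> fm" where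
  "subst FBot s k = FBot"
| "subst (Pred p ts) s k = Pred p (map (\<lambda>t. subst_tm t s k) ts)"
| "subst (Eq t u) s k = Eq (subst_tm t s k) (subst_tm u s k)"
| "subst (And a b) s k = And (subst a s k) (subst b s k)"
| "subst (Or a b) s k = Or (subst a s k) (subst b s k)"
| "subst (Imp a b) s k = Imp (subst a s k) (subst b s k)"
| "subst (All a) s k = All (subst a (lift_tm s 0) (Suc k))"
| "subst (Ex a) s k = Ex (subst a (lift_tm s 0) (Suc k))"

fun consts_tm :: "tm \<Rightarrow> nat set" where
  "consts_tm (Var i) = {}"
| "consts_tm (Const c) = {c}"

primrec consts_fm :: "fm \<Rightarrow> nat set" where
  "consts_fm FBot = {}"
| "consts_fm (Pred p ts) = (\<Union>t\<in>set ts. consts_tm t)"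
| "consts_fm (Eq t u) = consts_tm t \<union> consts_tm u"
| "consts_fm (And a b) = consts_fm a \<union> consts_fm b"
| "consts_fm (Or a b) = consts_fm a \<union> consts_fm b"
| "consts_fm (Imp a b) = consts_fm a \<union> consts_fm b"
| "consts_fm (All a) = consts_fm a"
| "consts_fm (Ex a) = consts_fm a"

text \<open>Eigenvariable conditions are realised with fresh object constants.\<close>

inductive deriv :: "fm list \<Rightarrow> fm \<Rightarrow> bool" (infix "\<turnstile>" 50) where
  Assum: "a \<in> set G \<Longrightarrow> G \<turnstile> a"
| BotE: "G \<turnstile> FBot \<Longrightarrow> G \<turnstile> a"
| AndI: "G \<turnstile> a \<Longrightarrow> G \<turnstile> b \<Longrightarrow> G \<turnstile> And a b"
| AndE1: "G \<turnstile> And a b \<Longrightarrow> G \<turnstile> a"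
| AndE2: "G \<turnstile> And a b \<Longrightarrow> G \<turnstile> b"
| OrI1: "G \<turnstile> a \<Longrightarrow> G \<turnstile> Or a b"
| OrI2: "G \<turnstile> b \<Longrightarrow> G \<turnstile> Or a b"
| OrE: "G \<turnstile> Or a b \<Longrightarrow> a # G \<turnstile> c \<Longrightarrow> b # G \<turnstile> c \<Longrightarrow> G \<turnstile> c"
| ImpI: "a # G \<turnstile> b \<Longrightarrow> G \<turnstile> Imp a b"
| ImpE: "G \<turnstile> Imp a b \<Longrightarrow> G \<turnstile> a \<Longrightarrow> G \<turnstile> b"
| AllI: "G \<turnstile> subst a (Const c) 0 \<Longrightarrow> c \<notin> (\<Union>g\<in>set G. consts_fm g) \<union> consts_fm a
         \<Longrightarrow> G \<turnstile> All a"
| AllE: "G \<turnstile> All a \<Longrightarrow> G \<turnstile> subst a t 0"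
| ExI: "G \<turnstile> subst a t 0 \<Longrightarrow> G \<turnstile> Ex a"
| ExE: "G \<turnstile> Ex a \<Longrightarrow> subst a (Const c) 0 # G \<turnstile> b
         \<Longrightarrow> c \<notin> (\<Union>g\<in>set G. consts_fm g) \<union> consts_fm a \<union> consts_fm b
         \<Longrightarrow> G \<turnstile> b"
| Refl: "G \<turnstile> Eq t t"
| EqSubst: "G \<turnstile> Eq s t \<Longrightarrow> G \<turnstile> subst a s 0 \<Longrightarrow> G \<turnstile> subst a t 0"

primrec qfree :: "fm \<Rightarrow> bool" where
  "qfree FBot = True"
| "qfree (Pred p ts) = True"
| "qfree (Eq t u) = True"
| "qfree (And a b) = (qfree a \<and> qfree b)"
| "qfree (Or a b) = (qfree a \<and> qfree b)"
| "qfree (Imp a b) = (qfree a \<and> qfree b)"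
| "qfree (All a) = False"
| "qfree (Ex a) = False"

fun vars_tm :: "tm \<Rightarrow> nat set" where
  "vars_tm (Var i) = {i}"
| "vars_tm (Const c) = {}"

fun RV :: "fm \<Rightarrow> nat set" where
  "RV FBot = {}"
| "RV (Eq (Var i) (Var j)) = {}"
| "RV (Eq t u) = vars_tm t \<union> vars_tm u"
| "RV (Pred p ts) = (\<Union>t\<in>set ts. vars_tm t)"
| "RV (And a b) = RV a \<union> RV b"
| "RV (Or a b) = RV a \<inter> RV b"
| "RV (Imp a b) = {}"
| "RV (All a) = {}"
| "RV (Ex a) = {}"

fun conj :: "fm list \<Rightarrow> fm" where
  "conj [] = Imp FBot FBot"
| "conj [a] = a"
| "conj (a # as) = And a (conj as)"

fun disj :: "fm list \<Rightarrow> fm" where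
  "disj [] = FBot"
| "disj [a] = a"
| "disj (a # as) = Or a (disj as)"

definition in_c :: "nat set \<Rightarrow> tm list \<Rightarrow> fm" where
  "in_c C xs = conj (map (\<lambda>x. disj (map (\<lambda>c. Eq x (Const c)) (sorted_list_of_set C))) xs)"

primrec preds :: "fm \<Rightarrow> (nat \<times> nat) list" where
  "preds FBot = []"
| "preds (Pred p ts) = [(p, length ts)]"
| "preds (Eq t u) = []"
| "preds (And a b) = preds a @ preds b"
| "preds (Or a b) = preds a @ preds b"
| "preds (Imp a b) = preds a @ preds b"
| "preds (All a) = preds a"
| "preds (Ex a) = preds a"

text \<open>\<open>\<forall>x1..xn (p(x1,...,xn) \<rightarrow> in_C(x1,...,xn))\<close>, with xj = de Bruijn index n-j.\<close>

definition spp_ax :: "nat set \<Rightarrow> nat \<times> nat \<Rightarrow> fm" where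
  "spp_ax C pn = (let n = snd pn; xs = map (\<lambda>j. Var (n - Suc j)) [0..<n] in
     (All ^^ n) (Imp (Pred (fst pn) xs) (in_c C xs)))"

definition SPP :: "nat set \<Rightarrow> fm \<Rightarrow> fm" where
  "SPP C F = conj (map (spp_ax C) (remdups (preds F)))"

end

theory Submission
  imports Defs
begin

primrec map_tms :: "(tm \<Rightarrow> tm) \<Rightarrow> fm \<Rightarrow> fm" where
  "map_tms f FBot = FBot"
| "map_tms f (Pred p ts) = Pred p (map f ts)"
| "map_tms f (Eq t u) = Eq (f t) (f u)"
| "map_tms f (And a b) = And (map_tms f a) (map_tms f b)"
| "map_tms f (Or a b) = Or (map_tms f a) (map_tms f b)"
| "map_tms f (Imp a b) = Imp (map_tms f a) (map_tms f b)"
| "map_tms f (All a) = All a"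
| "map_tms f (Ex a) = Ex a"

primrec tms_fm :: "fm \<Rightarrow> tm set" where
  "tms_fm FBot = {}"
| "tms_fm (Pred p ts) = set ts"
| "tms_fm (Eq t u) = {t, u}"
| "tms_fm (And a b) = tms_fm a \<union> tms_fm b"
| "tms_fm (Or a b) = tms_fm a \<union> tms_fm b"
| "tms_fm (Imp a b) = tms_fm a \<union> tms_fm b"
| "tms_fm (All a) = {}"
| "tms_fm (Ex a) = {}"

lemma subst_qfree: "qfree b \<Longrightarrow> subst b s k = map_tms (\<lambda>u. subst_tm u s k) b"
  by (induction b) auto

lemma qfree_map_tms: "qfree (map_tms f b) = qfree b"
  by (induction b) auto

lemma map_tms_comp: "map_tms f (map_tms g b) = map_tms (f \<circ> g) b"
  by (induction b) auto

lemma map_tms_cong: "(\<forall>u\<in>tms_fm b. f u = g u) \<Longrightarrow> map_tms f b = map_tms g b"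
  by (induction b) auto

lemma map_tms_conj: "map_tms f (conj as) = conj (map (map_tms f) as)"
  by (induction as rule: conj.induct) auto

lemma map_tms_disj: "map_tms f (disj as) = disj (map (map_tms f) as)"
  by (induction as rule: disj.induct) auto

lemma qfree_conj: "(\<forall>a\<in>set as. qfree a) \<Longrightarrow> qfree (conj as)"
  by (induction as rule: conj.induct) auto

lemma qfree_disj: "(\<forall>a\<in>set as. qfree a) \<Longrightarrow> qfree (disj as)"
  by (induction as rule: disj.induct) auto

lemma tms_conj: "tms_fm (conj as) \<subseteq> (\<Union>a\<in>set as. tms_fm a)"
  by (induction as rule: conj.induct) auto

lemma tms_disj: "tms_fm (disj as) \<subseteq> (\<Union>a\<in>set as. tms_fm a)"
  by (induction as rule: disj.induct) auto

lemma map_tms_in_c: "(\<forall>c. f (Const c) = Const c) \<Longrightarrow> map_tms f (in_c C xs) = in_c C (map f xs)"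
  unfolding in_c_def by (simp add: map_tms_conj map_tms_disj o_def)

lemma tms_in_c: "tms_fm (in_c C xs) \<subseteq> set xs \<union> range Const"
proof -
  have "tms_fm (in_c C xs) \<subseteq> (\<Union>a\<in>set (map (\<lambda>x. disj (map (\<lambda>c. Eq x (Const c)) (sorted_list_of_set C))) xs). tms_fm a)"
    unfolding in_c_def by (rule tms_conj)
  also have "\<dots> \<subseteq> set xs \<union> range Const"
  proof (rule UN_least)
    fix a assume "a \<in> set (map (\<lambda>x. disj (map (\<lambda>c. Eq x (Const c)) (sorted_list_of_set C))) xs)"
    then obtain x where x: "x \<in> set xs" and a: "a = disj (map (\<lambda>c. Eq x (Const c)) (sorted_list_of_set C))" by auto
    have "tms_fm a \<subseteq> (\<Union>b\<in>set (map (\<lambda>c. Eq x (Const c)) (sorted_list_of_set C)). tms_fm b)"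
      unfolding a by (rule tms_disj)
    also have "\<dots> \<subseteq> set xs \<union> range Const" using x by auto
    finally show "tms_fm a \<subseteq> set xs \<union> range Const" .
  qed
  finally show ?thesis .
qed

lemma subst_All_pow: "subst ((All ^^ m) b) t k = (All ^^ m) (subst b (((\<lambda>s. lift_tm s 0) ^^ m) t) (k + m))"
proof (induction m arbitrary: t k)
  case 0 then show ?case by simp
next
  case (Suc m)
  have "subst ((All ^^ Suc m) b) t k = All (subst ((All ^^ m) b) (lift_tm t 0) (Suc k))" by simp
  also have "\<dots> = All ((All ^^ m) (subst b (((\<lambda>s. lift_tm s 0) ^^ m) (lift_tm t 0)) (Suc k + m)))"
    using Suc by simp
  also have "((\<lambda>s. lift_tm s 0) ^^ m) (lift_tm t 0) = ((\<lambda>s. lift_tm s 0) ^^ Suc m) t"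
    by (simp only: funpow_Suc_right o_def)
  finally show ?case by simp
qed

definition lif :: "nat \<Rightarrow> tm \<Rightarrow> tm" where
  "lif k t = (case t of Var x \<Rightarrow> Var (x + k) | Const c \<Rightarrow> Const c)"

lemma lift_pow: "((\<lambda>s. lift_tm s 0) ^^ k) t = lif k t"
  by (induction k) (auto simp: lif_def split: tm.splits)

definition sig :: "nat \<Rightarrow> tm list \<Rightarrow> nat \<Rightarrow> tm \<Rightarrow> tm" where
  "sig n ts j u = (case u of Var i \<Rightarrow> if i < n - j then Var i else lif (n - j) (ts ! (n - 1 - i))
                   | Const c \<Rightarrow> Const c)"

lemma inst_step:
  assumes "\<forall>u\<in>tms_fm b. (\<exists>i<n. u = Var i) \<or> (\<exists>c. u = Const c)" "qfree b"
    and "j < n" and "G \<turnstile> (All ^^ (n - j)) (map_tms (sig n ts j) b)"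
  shows "G \<turnstile> (All ^^ (n - Suc j)) (map_tms (sig n ts (Suc j)) b)"
proof -
  define m where "m = n - Suc j"
  have nj: "n - j = Suc m" using assms(3) m_def by simp
  have "G \<turnstile> All ((All ^^ m) (map_tms (sig n ts j) b))" using assms(4) nj by simp
  then have "G \<turnstile> subst ((All ^^ m) (map_tms (sig n ts j) b)) (ts ! j) 0" by (rule AllE)
  then have "G \<turnstile> (All ^^ m) (subst (map_tms (sig n ts j) b) (lif m (ts ! j)) m)"
    by (simp add: subst_All_pow lift_pow)
  also have "subst (map_tms (sig n ts j) b) (lif m (ts ! j)) m
      = map_tms ((\<lambda>u. subst_tm u (lif m (ts ! j)) m) \<circ> sig n ts j) b"
    using assms(2) by (simp add: subst_qfree qfree_map_tms map_tms_comp)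
  also have "\<dots> = map_tms (sig n ts (Suc j)) b"
  proof (rule map_tms_cong, rule ballI)
    fix u assume "u \<in> tms_fm b"
    then have "(\<exists>i<n. u = Var i) \<or> (\<exists>c. u = Const c)" using assms(1) by blast
    then show "((\<lambda>u. subst_tm u (lif m (ts ! j)) m) \<circ> sig n ts j) u = sig n ts (Suc j) u"
    proof
      assume "\<exists>i<n. u = Var i"
      then obtain i where i: "i < n" "u = Var i" by blast
      consider "i < m" | "i = m" | "i > m" by linarith
      then show ?thesis
      proof cases
        case 1
        then show ?thesis using i nj m_def by (auto simp: sig_def)
      next
        case 2
        then have "n - Suc i = j" using nj m_def by simp
        then show ?thesis using i nj m_def 2
          by (auto simp: sig_def lif_def split: tm.splits)
      qed (use i nj m_def in \<open>auto simp: sig_def lif_def split: tm.splits\<close>)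
    qed (auto simp: sig_def)
  qed
  finally show ?thesis unfolding m_def .
qed

lemma inst_all:
  assumes "\<forall>u\<in>tms_fm b. (\<exists>i<n. u = Var i) \<or> (\<exists>c. u = Const c)" "qfree b"
    and "G \<turnstile> (All ^^ n) b"
  shows "j \<le> n \<Longrightarrow> G \<turnstile> (All ^^ (n - j)) (map_tms (sig n ts j) b)"
proof (induction j)
  case 0
  have "map_tms (sig n ts 0) b = b"
  proof -
    have "map_tms (sig n ts 0) b = map_tms id b"
      using assms(1) by (intro map_tms_cong) (auto simp: sig_def)
    also have "map_tms id b = b" by (induction b) (auto simp: map_idI)
    finally show ?thesis .
  qed
  then show ?case using assms(3) by simp
next
  case (Suc j)
  then show ?case using inst_step[OF assms(1,2)] by simp
qed

lemma conj_elim: "a \<in> set as \<Longrightarrow> G \<turnstile> conj as \<Longrightarrow> G \<turnstile> a"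
proof (induction as rule: conj.induct)
  case (3 a b c)
  then show ?case by (auto intro: AndE1 AndE2)
qed auto

lemma disj_intro: "a \<in> set as \<Longrightarrow> G \<turnstile> a \<Longrightarrow> G \<turnstile> disj as"
proof (induction as rule: disj.induct)
  case (3 a b c)
  then show ?case by (auto intro: OrI1 OrI2)
qed auto

lemma in_c_single: "in_c C [Var x] = disj (map (\<lambda>c. Eq (Var x) (Const c)) (sorted_list_of_set C))"
  by (simp add: in_c_def)

lemma pred_case:
  assumes "SPP C F \<in> set G" "(p, length ts) \<in> set (preds F)" "G \<turnstile> Pred p ts" "Var x \<in> set ts"
  shows "G \<turnstile> in_c C [Var x]"
proof -
  define n where "n = length ts"
  define xs where "xs = map (\<lambda>j. Var (n - Suc j)) [0..<n]"
  define b where "b = Imp (Pred p xs) (in_c C xs)"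
  have "G \<turnstile> SPP C F" using assms(1) by (rule Assum)
  then have "G \<turnstile> spp_ax C (p, n)" unfolding SPP_def
    by (rule conj_elim[rotated]) (use assms(2) n_def in auto)
  then have ax: "G \<turnstile> (All ^^ n) b" by (simp add: spp_ax_def b_def xs_def Let_def)
  have qb: "qfree b" by (simp add: b_def in_c_def qfree_conj qfree_disj)
  have tb: "\<forall>u\<in>tms_fm b. (\<exists>i<n. u = Var i) \<or> (\<exists>c. u = Const c)"
    using tms_in_c[of C xs] by (auto simp: b_def xs_def)
  have "G \<turnstile> (All ^^ (n - n)) (map_tms (sig n ts n) b)"
    using inst_all[OF tb qb ax, where j=n and ts=ts] by simp
  moreover have "map (sig n ts n) xs = ts"
    by (rule nth_equalityI) (auto simp: xs_def n_def sig_def lif_def split: tm.splits)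
  ultimately have "G \<turnstile> Imp (Pred p ts) (in_c C ts)"
    by (simp add: b_def map_tms_in_c sig_def)
  then have "G \<turnstile> in_c C ts" using assms(3) by (rule ImpE)
  then show ?thesis unfolding in_c_def in_c_single
    by (rule conj_elim[rotated]) (use assms(4) in auto)
qed

lemma main:
  assumes "finite C" "SPP C F \<in> set G"
  shows "qfree H \<Longrightarrow> x \<in> RV H \<Longrightarrow> consts_fm H \<subseteq> C \<Longrightarrow> set (preds H) \<subseteq> set (preds F)
    \<Longrightarrow> G \<turnstile> H \<Longrightarrow> G \<turnstile> in_c C [Var x]"
  using assms(2)
proof (induction H arbitrary: G)
  case (Pred p ts)
  then obtain t where "t \<in> set ts" "x \<in> vars_tm t" by auto
  moreover have "t = Var x" using \<open>x \<in> vars_tm t\<close> by (cases t) auto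
  ultimately have "Var x \<in> set ts" by simp
  then show ?case using Pred pred_case by auto
next
  case (Eq t u)
  show ?case
  proof (cases t)
    case (Var i)
    show ?thesis
    proof (cases u)
      case (Var j) then show ?thesis using Eq \<open>t = Var i\<close> by simp
    next
      case (Const c)
      then have "x = i" "c \<in> C" using Eq \<open>t = Var i\<close> by auto
      then show ?thesis unfolding in_c_single using Eq \<open>t = Var i\<close> Const assms(1)
        by (intro disj_intro[of "Eq (Var x) (Const c)"]) auto
    qed
  next
    case (Const c)
    show ?thesis
    proof (cases u)
      case (Var j)
      then have xj: "x = j" "c \<in> C" using Eq \<open>t = Const c\<close> by auto
      have "G \<turnstile> Eq (Const c) (Var x)" using Eq Const Var xj by simp
      moreover have "G \<turnstile> subst (Eq (Var 0) (Const c)) (Const c) 0" by (simp add: Refl)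
      ultimately have "G \<turnstile> subst (Eq (Var 0) (Const c)) (Var x) 0" by (rule EqSubst)
      then have "G \<turnstile> Eq (Var x) (Const c)" by simp
      then show ?thesis unfolding in_c_single using xj assms(1)
        by (intro disj_intro[of "Eq (Var x) (Const c)"]) auto
    next
      case (Const d) then show ?thesis using Eq \<open>t = Const c\<close> by simp
    qed
  qed
next
  case (And a b)
  show ?case
  proof (cases "x \<in> RV a")
    case True
    then show ?thesis using And.IH(1)[of G] And.prems AndE1 by auto
  next
    case False
    then show ?thesis using And.IH(2)[of G] And.prems AndE2 by auto
  qed
next
  case (Or a b)
  have "a # G \<turnstile> in_c C [Var x]"
    using Or.IH(1)[of "a # G"] Or.prems Assum[of a "a # G"] by auto
  moreover have "b # G \<turnstile> in_c C [Var x]"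
    using Or.IH(2)[of "b # G"] Or.prems Assum[of b "b # G"] by auto
  ultimately show ?case using Or.prems by (auto intro: OrE)
qed auto

theorem lemma6:
  fixes F :: fm and x :: nat and C :: "nat set"
  assumes "qfree F"
    and "x \<in> RV F"
    and "finite C" and "C \<noteq> {}"
    and "consts_fm F \<subseteq> C"
  shows "[SPP C F] \<turnstile> Imp F (in_c C [Var x])"
proof (rule ImpI)
  show "[F, SPP C F] \<turnstile> in_c C [Var x]"
    using main[OF assms(3), where G="[F, SPP C F]" and H=F and F=F] assms Assum[of F "[F, SPP C F]"] by simp
qed

end
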